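(* Let $R$ be a $*$-ring. Then $R$ is strongly $J$-$*$-clean if and only if (1) $R$ is strongly $*$-clean, and (2) $R/M\cong\mathbb{Z}_2$ for all maximal ideals $M$ of $R$.
   Context: All rings are associative with identity. A $*$-ring is a ring $R$ with an involution $*$, i.e. a map $a\mapsto a^*$ with $(a+b)^*=a^*+b^*$, $(ab)^*=b^*a^*$, $(a^* )^*=a$. $U(R)$ denotes the group of units and $J(R)$ the Jacobson radical of $R$. A projection is an element $e$ with $e^2=e=e^*$. $R$ is strongly $J$-$*$-clean if every $a\in R$ can be written $a=e+u$ with $e$ a projection, $u\in J(R)$ and $ae=ea$. $R$ is strongly $*$-clean if every $a\in R$ can be written $a=e+u$ with $e$ a projection, $u\in U(R)$ and $eu=ue$. Maximal ideals are two-sided. *)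

theory Defs
  imports "HOL-Algebra.Algebra"
begin

definition star_ring :: "('a, 'b) ring_scheme \<Rightarrow> ('a \<Rightarrow> 'a) \<Rightarrow> bool" where
  "star_ring R s \<longleftrightarrow> ring R \<and>
     (\<forall>a\<in>carrier R. s a \<in> carrier R) \<and>
     (\<forall>a\<in>carrier R. \<forall>b\<in>carrier R. s (a \<oplus>\<^bsub>R\<^esub> b) = s a \<oplus>\<^bsub>R\<^esub> s b) \<and>
     (\<forall>a\<in>carrier R. \<forall>b\<in>carrier R. s (a \<otimes>\<^bsub>R\<^esub> b) = s b \<otimes>\<^bsub>R\<^esub> s a) \<and>
     (\<forall>a\<in>carrier R. s (s a) = a)"

definition projection :: "('a, 'b) ring_scheme \<Rightarrow> ('a \<Rightarrow> 'a) \<Rightarrow> 'a \<Rightarrow> bool" where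
  "projection R s e \<longleftrightarrow> e \<in> carrier R \<and> e \<otimes>\<^bsub>R\<^esub> e = e \<and> s e = e"

definition left_ideal :: "'a set \<Rightarrow> ('a, 'b) ring_scheme \<Rightarrow> bool" where
  "left_ideal I R \<longleftrightarrow> additive_subgroup I R \<and>
     (\<forall>r\<in>carrier R. \<forall>a\<in>I. r \<otimes>\<^bsub>R\<^esub> a \<in> I)"

definition maximal_left_ideal :: "'a set \<Rightarrow> ('a, 'b) ring_scheme \<Rightarrow> bool" where
  "maximal_left_ideal I R \<longleftrightarrow> left_ideal I R \<and> I \<noteq> carrier R \<and>
     (\<forall>J. left_ideal J R \<and> I \<subseteq> J \<longrightarrow> J = I \<or> J = carrier R)"

definition jacobson :: "('a, 'b) ring_scheme \<Rightarrow> 'a set" where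
  "jacobson R = carrier R \<inter> \<Inter>{I. maximal_left_ideal I R}"

definition strongly_J_star_clean :: "('a, 'b) ring_scheme \<Rightarrow> ('a \<Rightarrow> 'a) \<Rightarrow> bool" where
  "strongly_J_star_clean R s \<longleftrightarrow>
     (\<forall>a\<in>carrier R. \<exists>e u. projection R s e \<and> u \<in> jacobson R \<and>
        a = e \<oplus>\<^bsub>R\<^esub> u \<and> a \<otimes>\<^bsub>R\<^esub> e = e \<otimes>\<^bsub>R\<^esub> a)"

definition strongly_star_clean :: "('a, 'b) ring_scheme \<Rightarrow> ('a \<Rightarrow> 'a) \<Rightarrow> bool" where
  "strongly_star_clean R s \<longleftrightarrow>
     (\<forall>a\<in>carrier R. \<exists>e u. projection R s e \<and> u \<in> Units R \<and>
        a = e \<oplus>\<^bsub>R\<^esub> u \<and> e \<otimes>\<^bsub>R\<^esub> u = u \<otimes>\<^bsub>R\<^esub> e)"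

end

theory Submission
  imports Defs
begin


abbreviation I2 :: "int set" where "I2 \<equiv> Idl\<^bsub>\<Z>\<^esub> {2::int}"

lemma I2_ideal: "ideal I2 \<Z>" by (simp add: int.genideal_ideal)

definition pi2 :: "int \<Rightarrow> int set" where "pi2 n = I2 +>\<^bsub>\<Z>\<^esub> n"

lemma pi2_hom: "pi2 \<in> ring_hom \<Z> (ZFact 2)"
proof -
  have "pi2 = (+>\<^bsub>\<Z>\<^esub>) I2" unfolding pi2_def by (rule ext) simp
  thus ?thesis using ideal.rcos_ring_hom[OF I2_ideal] unfolding ZFact_def by simp
qed

lemma Z2_ring: "ring (ZFact 2)" using ZFact_is_cring cring.axioms(1) by blast

lemma Zring: "ring \<Z>" using int.ring_axioms by simp

lemma pi2_eq: "pi2 a = pi2 b \<longleftrightarrow> a mod 2 = b mod 2"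
  using ZMod_eq_mod[of 2 a b] unfolding ZMod_def pi2_def by simp

lemma pi2_zero: "pi2 0 = \<zero>\<^bsub>ZFact 2\<^esub>"
  using ring_hom_zero[OF pi2_hom Zring Z2_ring] by simp

lemma pi2_one: "pi2 1 = \<one>\<^bsub>ZFact 2\<^esub>"
  using ring_hom_one[OF pi2_hom] by simp

lemma pi2_add: "pi2 (a + b) = pi2 a \<oplus>\<^bsub>ZFact 2\<^esub> pi2 b"
  using ring_hom_add[OF pi2_hom, of a b] by simp

lemma pi2_mult: "pi2 (a * b) = pi2 a \<otimes>\<^bsub>ZFact 2\<^esub> pi2 b"
  using ring_hom_mult[OF pi2_hom, of a b] by simp

lemma pi2_01: "pi2 0 \<noteq> pi2 1" using pi2_eq by simp

lemma Z2_carrier: "carrier (ZFact 2) = {pi2 0, pi2 1}"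
proof (rule equalityI)
  show "{pi2 0, pi2 1} \<subseteq> carrier (ZFact 2)" using ring_hom_closed[OF pi2_hom] by simp
  show "carrier (ZFact 2) \<subseteq> {pi2 0, pi2 1}"
  proof (rule subsetI)
    fix Y assume "Y \<in> carrier (ZFact 2)"
    then obtain n where n: "Y = pi2 n"
      unfolding ZFact_def FactRing_def A_RCOSETS_defs pi2_def by (auto simp: a_r_coset_def)
    have "n mod 2 = 0 \<or> n mod 2 = 1" by presburger
    hence "pi2 n = pi2 0 \<or> pi2 n = pi2 1" using pi2_eq by auto
    thus "Y \<in> {pi2 0, pi2 1}" using n by auto
  qed
qed

context ring begin

lemma star_props:
  assumes "star_ring R s"
  shows "\<And>a. a\<in>carrier R \<Longrightarrow> s a \<in> carrier R"
    "\<And>a b. a\<in>carrier R \<Longrightarrow> b\<in>carrier R \<Longrightarrow> s (a \<oplus> b) = s a \<oplus> s b"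
    "\<And>a b. a\<in>carrier R \<Longrightarrow> b\<in>carrier R \<Longrightarrow> s (a \<otimes> b) = s b \<otimes> s a"
    "\<And>a. a\<in>carrier R \<Longrightarrow> s (s a) = a"
  using assms unfolding star_ring_def by auto

lemma star_one: assumes "star_ring R s" shows "s \<one> = \<one>"
proof -
  note S = star_props[OF assms]
  have c: "s \<one> \<in> carrier R" using S by simp
  have "s \<one> = s \<one> \<otimes> s (s \<one>)" using S(4)[of \<one>] c by simp
  also have "\<dots> = s (s \<one> \<otimes> \<one>)" using S(3)[of "s \<one>" \<one>] c by simp
  also have "\<dots> = \<one>" using S(4)[of \<one>] c by simp
  finally show ?thesis .
qed

lemma star_zero: assumes "star_ring R s" shows "s \<zero> = \<zero>"
proof -
  note S = star_props[OF assms]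
  have "s \<zero> = s (\<zero> \<oplus> \<zero>)" by simp
  also have "\<dots> = s \<zero> \<oplus> s \<zero>" using S(2)[of \<zero> \<zero>] by simp
  finally have "s \<zero> \<oplus> \<zero> = s \<zero> \<oplus> s \<zero>" using S by simp
  thus ?thesis using S by (metis zero_closed add.l_cancel)
qed

lemma star_minus: assumes "star_ring R s" "a \<in> carrier R" shows "s (\<ominus> a) = \<ominus> s a"
proof -
  note S = star_props[OF assms(1)]
  have "s (\<ominus> a) \<oplus> s a = s (\<ominus> a \<oplus> a)" using S assms by simp
  also have "\<dots> = \<zero>" using star_zero[OF assms(1)] assms by (simp add: l_neg)
  finally show ?thesis using S assms by (metis a_inv_closed add.inv_equality)
qed

lemma star_diff: assumes "star_ring R s" "a \<in> carrier R" "b \<in> carrier R"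
  shows "s (a \<ominus> b) = s a \<ominus> s b"
  using assms star_props[OF assms(1)] star_minus[OF assms(1)] by (simp add: a_minus_def)

lemma proj_compl:
  assumes "star_ring R s" "projection R s e" shows "projection R s (\<one> \<ominus> e)"
proof -
  have e: "e \<in> carrier R" "e \<otimes> e = e" "s e = e" using assms(2) unfolding projection_def by auto
  have "(\<one> \<ominus> e) \<otimes> (\<one> \<ominus> e) = \<one> \<ominus> e \<ominus> e \<oplus> e \<otimes> e" using e by (algebra; simp add: a_ac)
  also have "\<dots> = \<one> \<ominus> e \<ominus> e \<oplus> e" using e by simp
  also have "\<dots> = \<one> \<ominus> e" using e by (algebra; simp add: a_ac)
  finally have 1: "(\<one> \<ominus> e) \<otimes> (\<one> \<ominus> e) = \<one> \<ominus> e" .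
  have 2: "s (\<one> \<ominus> e) = \<one> \<ominus> e" using e star_diff[OF assms(1), of \<one> e] star_one[OF assms(1)] by simp
  show ?thesis unfolding projection_def using 1 2 e by simp
qed

lemma unit_cancel:
  assumes "u \<in> Units R" "x \<in> carrier R" "u \<otimes> x = \<zero>" shows "x = \<zero>"
proof -
  have uc: "u \<in> carrier R" "inv u \<in> carrier R" using assms by auto
  have "x = (inv u \<otimes> u) \<otimes> x" using assms(1,2) by (simp add: Units_l_inv)
  also have "\<dots> = inv u \<otimes> (u \<otimes> x)" using assms(2) uc by (simp add: m_assoc)
  also have "\<dots> = inv u \<otimes> \<zero>" by (simp only: assms(3))
  also have "\<dots> = \<zero>" using uc by simp
  finally show ?thesis .
qed

lemma idem_is_proj:
  assumes st: "star_ring R s" and sc: "strongly_star_clean R s"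
    and e: "e \<in> carrier R" "e \<otimes> e = e"
  shows "s e = e"
proof -
  obtain f u where f: "projection R s f" and u: "u \<in> Units R" and efu: "e = f \<oplus> u"
    and fu: "f \<otimes> u = u \<otimes> f"
    using sc e unfolding strongly_star_clean_def by blast
  have f1: "f \<in> carrier R" "f \<otimes> f = f" "s f = f" using f unfolding projection_def by auto
  have uc: "u \<in> carrier R" using u by auto
  have ueq: "u = e \<ominus> f" using efu f1 uc by (algebra; simp add: a_ac)
  have "f \<otimes> e = f \<oplus> f \<otimes> u" using efu f1 uc by (simp add: r_distr)
  also have "\<dots> = f \<oplus> u \<otimes> f" using fu by simp
  also have "\<dots> = e \<otimes> f" using efu f1 uc by (simp add: l_distr)
  finally have fe: "f \<otimes> e = e \<otimes> f" .
  have "u \<otimes> (e \<otimes> f) = e \<otimes> e \<otimes> f \<ominus> f \<otimes> e \<otimes> f" unfolding ueq using e(1) f1(1) by (algebra; simp add: a_ac)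
  also have "\<dots> = \<zero>" using e f1 fe by (metis m_assoc r_neg minus_eq m_closed)
  finally have ef0: "e \<otimes> f = \<zero>" using unit_cancel[OF u] e f1 by simp
  have fe0: "f \<otimes> e = \<zero>" using fe ef0 by simp
  have "u \<otimes> (\<one> \<ominus> e \<ominus> f) = e \<ominus> e \<otimes> e \<ominus> e \<otimes> f \<ominus> f \<oplus> f \<otimes> e \<oplus> f \<otimes> f" unfolding ueq using e(1) f1(1) by (algebra; simp add: a_ac)
  also have "\<dots> = e \<ominus> e \<ominus> \<zero> \<ominus> f \<oplus> \<zero> \<oplus> f" using e f1 ef0 fe0 by simp
  also have "\<dots> = \<zero>" using e(1) f1(1) by (algebra; simp add: a_ac)
  finally have "\<one> \<ominus> e \<ominus> f = \<zero>" using unit_cancel[OF u] e f1 by simp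
  moreover have "e = (\<one> \<ominus> f) \<ominus> (\<one> \<ominus> e \<ominus> f)" using e(1) f1(1) by (algebra; simp add: a_ac)
  ultimately have "e = \<one> \<ominus> f" using f1(1) by (simp add: a_minus_def)
  thus ?thesis using star_diff[OF st] star_one[OF st] f1 by simp
qed

lemma proj_D: assumes "projection R s e" shows "e \<in> carrier R" "e \<otimes> e = e" "s e = e"
  using assms unfolding projection_def by auto

lemma proj_B0:
  assumes st: "star_ring R s" and sc: "strongly_star_clean R s"
    and e: "projection R s e" and r: "r \<in> carrier R"
  shows "e \<otimes> r \<otimes> (\<one> \<ominus> e) = \<zero>"
proof -
  note E = proj_D[OF e]
  note S = star_props[OF st]
  define c where "c = e \<otimes> r \<otimes> (\<one> \<ominus> e)"
  have cc: "c \<in> carrier R" unfolding c_def using E r by simp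
  have "e \<otimes> c = (e \<otimes> e) \<otimes> r \<otimes> (\<one> \<ominus> e)" unfolding c_def using E(1) r by (algebra; simp add: a_ac)
  hence ec: "e \<otimes> c = c" using E unfolding c_def by simp
  have "c \<otimes> e = e \<otimes> r \<otimes> (e \<ominus> e \<otimes> e)" unfolding c_def using E(1) r by (algebra; simp add: a_ac)
  hence ce: "c \<otimes> e = \<zero>" using E r by (simp add: r_neg minus_eq)
  have "c \<otimes> c = (c \<otimes> e) \<otimes> r \<otimes> (\<one> \<ominus> e)" unfolding c_def using E(1) r by (algebra; simp add: a_ac)
  hence c2: "c \<otimes> c = \<zero>" using ce r E by simp
  have "(e \<oplus> c) \<otimes> (e \<oplus> c) = e \<otimes> e \<oplus> e \<otimes> c \<oplus> c \<otimes> e \<oplus> c \<otimes> c" using E(1) cc by (algebra; simp add: a_ac)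
  also have "\<dots> = e \<oplus> c" using E ec ce c2 cc by simp
  finally have "s (e \<oplus> c) = e \<oplus> c" using idem_is_proj[OF st sc, of "e \<oplus> c"] E cc by simp
  hence sc1: "s c = c" using S(2)[of e c] S(1)[of c] E cc by (metis add.l_cancel)
  have "s c = s (\<one> \<ominus> e) \<otimes> (s r \<otimes> s e)" unfolding c_def using S E r by simp
  also have "\<dots> = (\<one> \<ominus> e) \<otimes> (s r \<otimes> e)" using star_diff[OF st, of \<one> e] star_one[OF st] E by simp
  finally have "e \<otimes> c = (e \<otimes> (\<one> \<ominus> e)) \<otimes> (s r \<otimes> e)" using sc1 E S r by (simp add: m_assoc)
  also have "e \<otimes> (\<one> \<ominus> e) = e \<ominus> e \<otimes> e" using E(1) by (algebra; simp add: a_ac)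
  finally have "e \<otimes> c = \<zero>" using E S r by (simp add: r_neg minus_eq)
  thus ?thesis using ec c_def by simp
qed

lemma proj_central:
  assumes st: "star_ring R s" and sc: "strongly_star_clean R s"
    and e: "projection R s e" and r: "r \<in> carrier R"
  shows "e \<otimes> r = r \<otimes> e"
proof -
  note E = proj_D[OF e]
  have e': "projection R s (\<one> \<ominus> e)" using proj_compl[OF st e] .
  have 1: "e \<otimes> r \<otimes> (\<one> \<ominus> e) = \<zero>" using proj_B0[OF st sc e r] .
  have 2: "(\<one> \<ominus> e) \<otimes> r \<otimes> (\<one> \<ominus> (\<one> \<ominus> e)) = \<zero>" using proj_B0[OF st sc e' r] .
  have "e \<otimes> r = e \<otimes> r \<otimes> (\<one> \<ominus> e) \<oplus> e \<otimes> r \<otimes> e" using E(1) r by (algebra; simp add: a_ac)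
  also have "\<dots> = e \<otimes> r \<otimes> e" using 1 E r by simp
  also have "\<dots> = r \<otimes> e \<ominus> (\<one> \<ominus> e) \<otimes> r \<otimes> (\<one> \<ominus> (\<one> \<ominus> e))" using E(1) r by (algebra; simp add: a_ac)
  also have "\<dots> = r \<otimes> e" using 2 E r by (simp add: minus_eq)
  finally show ?thesis .
qed

lemma add_subgroupI':
  assumes "H \<subseteq> carrier R" "\<zero> \<in> H" "\<And>a b. a\<in>H \<Longrightarrow> b\<in>H \<Longrightarrow> a \<oplus> b \<in> H" "\<And>a. a\<in>H \<Longrightarrow> \<ominus>a \<in> H"
  shows "additive_subgroup H R"
  apply (rule additive_subgroupI, rule subgroup.intro)
  using assms by (auto simp: a_inv_def[symmetric])

lemma left_idealI:
  assumes "H \<subseteq> carrier R" "\<zero> \<in> H" "\<And>a b. a\<in>H \<Longrightarrow> b\<in>H \<Longrightarrow> a \<oplus> b \<in> H" "\<And>a. a\<in>H \<Longrightarrow> \<ominus>a \<in> H"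
   "\<And>r a. r \<in> carrier R \<Longrightarrow> a \<in> H \<Longrightarrow> r \<otimes> a \<in> H"
  shows "left_ideal H R"
  unfolding left_ideal_def using add_subgroupI'[OF assms(1-4)] assms(5) by blast

lemma left_idealD:
  assumes "left_ideal H R"
  shows "H \<subseteq> carrier R" "\<zero> \<in> H" "\<And>a b. a\<in>H \<Longrightarrow> b\<in>H \<Longrightarrow> a \<oplus> b \<in> H" "\<And>a. a\<in>H \<Longrightarrow> \<ominus>a \<in> H"
   "\<And>r a. r \<in> carrier R \<Longrightarrow> a \<in> H \<Longrightarrow> r \<otimes> a \<in> H"
  using assms unfolding left_ideal_def
  by (auto intro: additive_subgroup.a_Hcarr additive_subgroup.a_closed additive_subgroup.a_inv_closed additive_subgroup.zero_closed)

lemma left_ideal_minus: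
  assumes "left_ideal H R" "a \<in> H" "b \<in> H" shows "a \<ominus> b \<in> H"
  using left_idealD[OF assms(1)] assms(2,3) by (simp add: a_minus_def)

lemma left_ideal_one:
  assumes "left_ideal H R" "\<one> \<in> H" shows "H = carrier R"
  using left_idealD[OF assms(1)] assms(2) by (metis r_one subsetI subset_antisym)

lemma maxleftD:
  assumes "maximal_left_ideal L R"
  shows "left_ideal L R" "L \<noteq> carrier R" "\<one> \<notin> L"
    "\<And>J. left_ideal J R \<Longrightarrow> L \<subseteq> J \<Longrightarrow> J = L \<or> J = carrier R"
  using assms left_ideal_one unfolding maximal_left_ideal_def by blast+

lemma N_lemma:
  assumes L: "maximal_left_ideal L R" and x: "x \<in> carrier R" "x \<notin> L" and y: "y \<in> carrier R"
  shows "\<exists>l\<in>L. \<exists>b\<in>carrier R. y = l \<oplus> b \<otimes> x"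
proof -
  note LM = maxleftD[OF L]
  note LD = left_idealD[OF LM(1)]
  define N where "N = {z. \<exists>l\<in>L. \<exists>b\<in>carrier R. z = l \<oplus> b \<otimes> x}"
  have "left_ideal N R"
  proof (rule left_idealI)
    show "N \<subseteq> carrier R" unfolding N_def using LD(1) x by auto
    show "\<zero> \<in> N" unfolding N_def using LD(2) x by (auto intro!: bexI[of _ \<zero>])
    show "a \<oplus> b \<in> N" if A: "a \<in> N" "b \<in> N" for a b
    proof -
      obtain l1 b1 l2 b2 where "l1 \<in> L" "b1 \<in> carrier R" "a = l1 \<oplus> b1 \<otimes> x"
        "l2 \<in> L" "b2 \<in> carrier R" "b = l2 \<oplus> b2 \<otimes> x" using A unfolding N_def by blast
      moreover have "l1 \<oplus> b1 \<otimes> x \<oplus> (l2 \<oplus> b2 \<otimes> x) = (l1 \<oplus> l2) \<oplus> (b1 \<oplus> b2) \<otimes> x"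
        if "l1 \<in> carrier R" "l2 \<in> carrier R" "b1 \<in> carrier R" "b2 \<in> carrier R"
        using that x by (algebra; simp add: a_ac)
      ultimately show ?thesis unfolding N_def using LD x by blast
    qed
    show "\<ominus> a \<in> N" if A: "a \<in> N" for a
    proof -
      obtain l1 b1 where "l1 \<in> L" "b1 \<in> carrier R" "a = l1 \<oplus> b1 \<otimes> x"
        using A unfolding N_def by blast
      moreover have "\<ominus> (l1 \<oplus> b1 \<otimes> x) = (\<ominus> l1) \<oplus> (\<ominus> b1) \<otimes> x"
        if "l1 \<in> carrier R" "b1 \<in> carrier R"
        using that x by (algebra; simp add: a_ac)
      ultimately show ?thesis unfolding N_def using LD x by blast
    qed
    show "r \<otimes> a \<in> N" if A: "r \<in> carrier R" "a \<in> N" for r a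
    proof -
      obtain l1 b1 where "l1 \<in> L" "b1 \<in> carrier R" "a = l1 \<oplus> b1 \<otimes> x"
        using A unfolding N_def by blast
      moreover have "r \<otimes> (l1 \<oplus> b1 \<otimes> x) = (r \<otimes> l1) \<oplus> (r \<otimes> b1) \<otimes> x"
        if "l1 \<in> carrier R" "b1 \<in> carrier R"
        using that x \<open>r \<in> carrier R\<close> by (algebra; simp add: a_ac)
      ultimately show ?thesis unfolding N_def using LD x \<open>r \<in> carrier R\<close> by blast
    qed
  qed
  moreover have "L \<subseteq> N"
  proof
    fix l assume "l \<in> L"
    hence "l = l \<oplus> \<zero> \<otimes> x" using LD x by auto
    thus "l \<in> N" unfolding N_def using \<open>l \<in> L\<close> by blast
  qed
  moreover have "x \<in> N"
  proof -
    have "x = \<zero> \<oplus> \<one> \<otimes> x" using x by simp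
    thus ?thesis unfolding N_def using LD(2) by blast
  qed
  ultimately have "N = carrier R" using LM(4)[of N] x by blast
  thus ?thesis using y unfolding N_def by blast
qed

lemma central_idem_dich:
  assumes L: "maximal_left_ideal L R" and e: "e \<in> carrier R" "e \<otimes> e = e"
    and ec: "\<And>r. r \<in> carrier R \<Longrightarrow> e \<otimes> r = r \<otimes> e"
  shows "e \<in> L \<or> \<one> \<ominus> e \<in> L"
proof (cases "e \<in> L")
  case True thus ?thesis by simp
next
  case False hence "e \<notin> L" .
  note LM = maxleftD[OF L]
  note LD = left_idealD[OF LM(1)]
  obtain l b where lb: "l \<in> L" "b \<in> carrier R" "\<one> = l \<oplus> b \<otimes> e"
    using N_lemma[OF L e(1) \<open>e \<notin> L\<close> one_closed] by blast
  have lc: "l \<in> carrier R" using LD(1) lb by auto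
  have "\<one> \<ominus> e = (\<one> \<ominus> e) \<otimes> \<one>" using e by simp
  also have "\<dots> = (\<one> \<ominus> e) \<otimes> l \<oplus> (\<one> \<ominus> e) \<otimes> (b \<otimes> e)" using lb lc e by (simp add: r_distr)
  also have "(\<one> \<ominus> e) \<otimes> (b \<otimes> e) = (\<one> \<ominus> e) \<otimes> (e \<otimes> b)" using ec lb by simp
  also have "\<dots> = (e \<ominus> e \<otimes> e) \<otimes> b" using e(1) lb(2) by (algebra; simp add: a_ac)
  also have "\<dots> = \<zero>" using e lb by (simp add: r_neg minus_eq)
  finally have "\<one> \<ominus> e = (\<one> \<ominus> e) \<otimes> l" using lc e by simp
  hence "\<one> \<ominus> e \<in> L" using LD(5)[of "\<one> \<ominus> e" l] lb(1,2) e by simp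
  thus ?thesis by simp
qed

definition cleanH :: "bool" where
  "cleanH \<longleftrightarrow> (\<forall>x\<in>carrier R. \<exists>f u. f \<in> carrier R \<and> f \<otimes> f = f \<and>
      (\<forall>r\<in>carrier R. f \<otimes> r = r \<otimes> f) \<and> u \<in> Units R \<and> x = f \<oplus> u)"

lemma ideal_left: assumes "ideal J R" shows "left_ideal J R"
proof -
  interpret J: ideal J R by fact
  show ?thesis unfolding left_ideal_def using J.is_additive_subgroup J.I_l_closed by blast
qed

lemma maxleft_is_maximalideal:
  assumes H: cleanH and L: "maximal_left_ideal L R"
  shows "maximalideal L R"
proof -
  note LM = maxleftD[OF L]
  note LD = left_idealD[OF LM(1)]
  define P where "P = {x \<in> carrier R. \<forall>t\<in>carrier R. x \<otimes> t \<in> L}"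
  have Pmem: "x \<in> P \<longleftrightarrow> x \<in> carrier R \<and> (\<forall>t\<in>carrier R. x \<otimes> t \<in> L)" for x
    unfolding P_def by blast
  have PL: "P \<subseteq> L"
  proof
    fix x assume "x \<in> P"
    hence "x \<in> carrier R" "\<forall>t\<in>carrier R. x \<otimes> t \<in> L" using Pmem by blast+
    hence "x \<otimes> \<one> \<in> L" "x \<in> carrier R" by blast+
    thus "x \<in> L" by (simp only: r_one)
  qed
  have Pc: "P \<subseteq> carrier R" using Pmem by blast
  have Psub: "additive_subgroup P R"
  proof (rule add_subgroupI')
    show "P \<subseteq> carrier R" by (rule Pc)
    have "\<zero> \<otimes> t \<in> L" if "t \<in> carrier R" for t using LD(2) that by (simp only: l_null)
    thus "\<zero> \<in> P" using Pmem by blast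
    show "a \<oplus> b \<in> P" if A: "a \<in> P" "b \<in> P" for a b
    proof -
      have c: "a \<in> carrier R" "b \<in> carrier R" using A Pmem by blast+
      have "(a \<oplus> b) \<otimes> t \<in> L" if t: "t \<in> carrier R" for t
      proof -
        have "a \<otimes> t \<in> L" "b \<otimes> t \<in> L" using A Pmem t by blast+
        hence "a \<otimes> t \<oplus> b \<otimes> t \<in> L" using LD(3) by blast
        thus ?thesis using c t by (simp only: l_distr)
      qed
      thus ?thesis using Pmem c by blast
    qed
    show "\<ominus> a \<in> P" if A: "a \<in> P" for a
    proof -
      have c: "a \<in> carrier R" using A Pmem by blast+
      have "(\<ominus> a) \<otimes> t \<in> L" if t: "t \<in> carrier R" for t
      proof -
        have "a \<otimes> t \<in> L" using A Pmem t by blast+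
        hence "\<ominus> (a \<otimes> t) \<in> L" using LD(4) by blast
        thus ?thesis using c t by (simp only: l_minus)
      qed
      thus ?thesis using Pmem c by blast
    qed
  qed
  have Pid: "ideal P R"
  proof (rule idealI)
    show "ring R" by (rule ring_axioms)
    show "subgroup P (add_monoid R)" using Psub additive_subgroup.a_subgroup by blast
    show "x \<otimes> a \<in> P" if A: "a \<in> P" "x \<in> carrier R" for a x
    proof -
      have c: "a \<in> carrier R" using A Pmem by blast+
      have "(x \<otimes> a) \<otimes> t \<in> L" if t: "t \<in> carrier R" for t
      proof -
        have "a \<otimes> t \<in> L" using A Pmem t by blast+
        hence "x \<otimes> (a \<otimes> t) \<in> L" using LD(5) A(2) by blast
        thus ?thesis using c t A(2) by (simp only: m_assoc)
      qed
      thus ?thesis using Pmem c A(2) by blast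
    qed
    show "a \<otimes> x \<in> P" if A: "a \<in> P" "x \<in> carrier R" for a x
    proof -
      have c: "a \<in> carrier R" using A Pmem by blast+
      have "(a \<otimes> x) \<otimes> t \<in> L" if t: "t \<in> carrier R" for t
      proof -
        have "a \<otimes> (x \<otimes> t) \<in> L" using A Pmem t by blast
        thus ?thesis using c t A(2) by (simp only: m_assoc)
      qed
      thus ?thesis using Pmem c A(2) by blast
    qed
  qed
  have central_in: "f \<in> P" if A: "f \<in> carrier R" "\<forall>r\<in>carrier R. f \<otimes> r = r \<otimes> f" "f \<in> L" for f
  proof -
    have "f \<otimes> t \<in> L" if t: "t \<in> carrier R" for t
    proof -
      have "t \<otimes> f \<in> L" using LD(5)[OF t A(3)] .
      moreover have "f \<otimes> t = t \<otimes> f" using A(2) t by blast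
      ultimately show ?thesis by simp
    qed
    thus ?thesis using A(1) Pmem by blast
  qed
  have A: "\<exists>v\<in>Units R. x \<ominus> v \<in> P \<or> x \<ominus> \<one> \<ominus> v \<in> P" if x: "x \<in> carrier R" for x
  proof -
    obtain f u where fu: "f \<in> carrier R" "f \<otimes> f = f" "\<forall>r\<in>carrier R. f \<otimes> r = r \<otimes> f"
      "u \<in> Units R" "x = f \<oplus> u" using H x unfolding cleanH_def by blast
    have uc: "u \<in> carrier R" using fu(4) by auto
    from central_idem_dich[OF L fu(1,2)] fu(3)
    have "f \<in> L \<or> \<one> \<ominus> f \<in> L" by blast
    thus ?thesis
    proof
      assume "f \<in> L"
      hence "f \<in> P" by (rule central_in[OF fu(1) fu(3)])
      moreover have "x \<ominus> u = f" using fu(5) fu(1) uc by (algebra; simp add: a_ac)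
      ultimately have "x \<ominus> u \<in> P" by simp
      thus ?thesis using fu(4) by blast
    next
      assume fL: "\<one> \<ominus> f \<in> L"
      have fcomm: "\<forall>r\<in>carrier R. (\<one> \<ominus> f) \<otimes> r = r \<otimes> (\<one> \<ominus> f)"
      proof
        fix r assume r: "r \<in> carrier R"
        have "(\<one> \<ominus> f) \<otimes> r = r \<ominus> f \<otimes> r" using r fu(1) by (algebra; simp add: a_ac)
        also have "\<dots> = r \<ominus> r \<otimes> f" using fu(3)[rule_format, OF r] by simp
        also have "\<dots> = r \<otimes> (\<one> \<ominus> f)" using r fu(1) by (algebra; simp add: a_ac)
        finally show "(\<one> \<ominus> f) \<otimes> r = r \<otimes> (\<one> \<ominus> f)" .
      qed
      have "\<one> \<ominus> f \<in> P" by (rule central_in[OF _ fcomm fL]) (simp add: fu(1))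
      hence "\<ominus> (\<one> \<ominus> f) \<in> P" by (rule additive_subgroup.a_inv_closed[OF Psub])
      moreover have "x \<ominus> \<one> \<ominus> u = \<ominus> (\<one> \<ominus> f)" using fu(5) fu(1) uc by (algebra; simp add: a_ac)
      ultimately have "x \<ominus> \<one> \<ominus> u \<in> P" by simp
      thus ?thesis using fu(4) by blast
    qed
  qed
  have K: "\<exists>y\<in>carrier R. y \<otimes> x \<ominus> \<one> \<in> P" if x: "x \<in> carrier R" "x \<notin> P" for x
  proof -
    obtain t0 where t0: "t0 \<in> carrier R" "x \<otimes> t0 \<notin> L" using x Pmem by blast
    obtain l b where lb: "l \<in> L" "b \<in> carrier R" "t0 = l \<oplus> b \<otimes> (x \<otimes> t0)"
      using N_lemma[OF L _ t0(2) t0(1)] x t0 by blast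
    have lc: "l \<in> carrier R" using lb(1) LD(1) by blast
    obtain v where v: "v \<in> Units R" "b \<otimes> x \<ominus> v \<in> P \<or> b \<otimes> x \<ominus> \<one> \<ominus> v \<in> P"
      using A[of "b \<otimes> x"] x lb(1,2) by auto
    have vc: "v \<in> carrier R" "inv v \<in> carrier R" using v by auto
    show ?thesis using v(2)
    proof
      assume h: "b \<otimes> x \<ominus> v \<in> P"
      have "inv v \<otimes> b \<otimes> x \<ominus> \<one> = inv v \<otimes> (b \<otimes> x) \<ominus> inv v \<otimes> v" using v vc lb(1,2) x by (simp add: m_assoc)
      also have "\<dots> = inv v \<otimes> (b \<otimes> x \<ominus> v)" using vc lb(1,2) x by (algebra; simp add: a_ac)
      finally have "inv v \<otimes> b \<otimes> x \<ominus> \<one> \<in> P" using ideal.I_l_closed[OF Pid h vc(2)] by simp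
      thus ?thesis using vc lb(1,2) by (intro bexI[of _ "inv v \<otimes> b"]) auto
    next
      assume h: "b \<otimes> x \<ominus> \<one> \<ominus> v \<in> P"
      hence h1: "(b \<otimes> x \<ominus> \<one> \<ominus> v) \<otimes> t0 \<in> L" using t0 Pmem by blast
      have "(b \<otimes> x \<ominus> \<one>) \<otimes> t0 = b \<otimes> (x \<otimes> t0) \<ominus> t0" using lb(1,2) x t0 by (algebra; simp add: a_ac)
      also have "\<dots> = \<ominus> l"
      proof -
        have "b \<otimes> (x \<otimes> t0) \<ominus> (l \<oplus> b \<otimes> (x \<otimes> t0)) = \<ominus> l" using lc lb(2) x(1) t0(1) by (algebra; simp add: a_ac)
        thus ?thesis by (simp only: lb(3)[symmetric])
      qed
      finally have h2: "(b \<otimes> x \<ominus> \<one>) \<otimes> t0 \<in> L" using LD(4) lb(1) by simp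
      have "v \<otimes> t0 = (b \<otimes> x \<ominus> \<one>) \<otimes> t0 \<ominus> (b \<otimes> x \<ominus> \<one> \<ominus> v) \<otimes> t0" using lb(1,2) x t0 vc by (algebra; simp add: a_ac)
      hence "v \<otimes> t0 \<in> L" using h1 h2 left_ideal_minus[OF LM(1)] by simp
      hence "inv v \<otimes> (v \<otimes> t0) \<in> L" using LD(5) vc by simp
      moreover have "inv v \<otimes> (v \<otimes> t0) = t0" using vc t0(1) Units_l_inv[OF v(1)] by (simp add: m_assoc[symmetric])
      ultimately have "t0 \<in> L" by simp
      hence "x \<otimes> t0 \<in> L" using LD(5) x by simp
      thus ?thesis using t0 by simp
    qed
  qed
  have LP: "L \<subseteq> P"
  proof
    fix x assume xL: "x \<in> L"
    show "x \<in> P"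
    proof (rule ccontr)
      assume "x \<notin> P"
      have xc: "x \<in> carrier R" using xL LD(1) by blast
      then obtain y where y: "y \<in> carrier R" "y \<otimes> x \<ominus> \<one> \<in> P" using K[OF xc \<open>x \<notin> P\<close>] by blast
      have "y \<otimes> x \<in> L" using LD(5)[OF y(1) xL] .
      hence "y \<otimes> x \<ominus> (y \<otimes> x \<ominus> \<one>) \<in> L" using left_ideal_minus[OF LM(1)] y PL by blast
      moreover have "y \<otimes> x \<ominus> (y \<otimes> x \<ominus> \<one>) = \<one>" using y(1) xc by (algebra; simp add: a_ac)
      ultimately show False using LM(3) by simp
    qed
  qed
  have LeqP: "L = P" using LP PL by blast
  show ?thesis
  proof (rule maximalidealI)
    show "ideal L R" using Pid LeqP by simp
    show "carrier R \<noteq> L" using LM(2) by simp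
    fix J assume J: "ideal J R" "L \<subseteq> J" "J \<subseteq> carrier R"
    show "J = L \<or> J = carrier R"
    proof (cases "J = L")
      case False
      then obtain x where x: "x \<in> J" "x \<notin> P" using J LeqP by blast
      have xc: "x \<in> carrier R" using x J(3) by blast
      then obtain y where y: "y \<in> carrier R" "y \<otimes> x \<ominus> \<one> \<in> P" using K[OF xc x(2)] by blast
      have "y \<otimes> x \<in> J" using ideal.I_l_closed[OF J(1) x(1) y(1)] .
      moreover have "y \<otimes> x \<ominus> \<one> \<in> J" using y(2) J(2) LeqP by blast
      ultimately have "y \<otimes> x \<ominus> (y \<otimes> x \<ominus> \<one>) \<in> J"
        using left_ideal_minus[OF ideal_left[OF J(1)]] by blast
      moreover have "y \<otimes> x \<ominus> (y \<otimes> x \<ominus> \<one>) = \<one>" using y(1) xc by (algebra; simp add: a_ac)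
      ultimately have "\<one> \<in> J" by simp
      thus ?thesis using ideal.one_imp_carrier[OF J(1)] by simp
    qed simp
  qed
qed


lemma exists_maxleft:
  assumes I: "left_ideal I R" and one: "\<one> \<notin> I"
  shows "\<exists>L. maximal_left_ideal L R \<and> I \<subseteq> L"
proof -
  define S where "S = {K. left_ideal K R \<and> I \<subseteq> K \<and> \<one> \<notin> K}"
  have "\<exists>M\<in>S. \<forall>Y\<in>S. M \<subseteq> Y \<longrightarrow> Y = M"
  proof (rule subset_Zorn_nonempty)
    show "S \<noteq> {}" using I one unfolding S_def by blast
  next
    fix C assume C: "C \<noteq> {}" "subset.chain S C"
    have CS: "C \<subseteq> S" and ch: "\<forall>A\<in>C. \<forall>B\<in>C. A \<subseteq> B \<or> B \<subseteq> A"
      using C(2) unfolding subset_chain_def by auto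
    have li: "left_ideal K R" if "K \<in> C" for K using CS that unfolding S_def by blast
    have "left_ideal (\<Union>C) R"
    proof (rule left_idealI)
      show "\<Union>C \<subseteq> carrier R"
      proof
        fix a assume "a \<in> \<Union>C"
        then obtain K where "K \<in> C" "a \<in> K" by blast
        thus "a \<in> carrier R" using left_idealD(1)[OF li] by blast
      qed
      obtain K0 where "K0 \<in> C" using C(1) by blast
      thus "\<zero> \<in> \<Union>C" using left_idealD(2)[OF li[OF \<open>K0 \<in> C\<close>]] by blast
      show "a \<oplus> b \<in> \<Union>C" if ab: "a \<in> \<Union>C" "b \<in> \<Union>C" for a b
      proof -
        obtain A B where AB: "A \<in> C" "B \<in> C" "a \<in> A" "b \<in> B" using ab by blast
        show ?thesis
        proof (cases "A \<subseteq> B")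
          case True
          hence "a \<oplus> b \<in> B" using AB left_idealD(3)[OF li[OF AB(2)]] by blast
          thus ?thesis using AB by blast
        next
          case False hence "B \<subseteq> A" using ch AB by blast
          hence "a \<oplus> b \<in> A" using AB left_idealD(3)[OF li[OF AB(1)]] by blast
          thus ?thesis using AB by blast
        qed
      qed
      show "\<ominus> a \<in> \<Union>C" if ab: "a \<in> \<Union>C" for a
      proof -
        obtain A where AB: "A \<in> C" "a \<in> A" using ab by blast
        hence "\<ominus> a \<in> A" using left_idealD(4)[OF li[OF AB(1)]] by blast
        thus ?thesis using AB by blast
      qed
      show "r \<otimes> a \<in> \<Union>C" if ab: "r \<in> carrier R" "a \<in> \<Union>C" for r a
      proof -
        obtain A where AB: "A \<in> C" "a \<in> A" using ab by blast
        hence "r \<otimes> a \<in> A" using left_idealD(5)[OF li[OF AB(1)] ab(1)] by blast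
        thus ?thesis using AB by blast
      qed
    qed
    moreover have "I \<subseteq> \<Union>C" using C(1) CS unfolding S_def by blast
    moreover have "\<one> \<notin> \<Union>C" using CS unfolding S_def by blast
    ultimately show "\<Union>C \<in> S" unfolding S_def by blast
  qed
  then obtain M where M: "M \<in> S" "\<forall>Y\<in>S. M \<subseteq> Y \<longrightarrow> Y = M" by blast
  have MI: "left_ideal M R" "I \<subseteq> M" "\<one> \<notin> M" using M(1) unfolding S_def by auto
  have "maximal_left_ideal M R"
    unfolding maximal_left_ideal_def
  proof (intro conjI allI impI)
    show "left_ideal M R" by (rule MI(1))
    show "M \<noteq> carrier R" using MI(3) by auto
    fix J assume J: "left_ideal J R \<and> M \<subseteq> J"
    show "J = M \<or> J = carrier R"
    proof (cases "\<one> \<in> J")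
      case True thus ?thesis using left_ideal_one J by blast
    next
      case False hence "J \<in> S" using J MI(2) unfolding S_def by blast
      thus ?thesis using M(2) J by blast
    qed
  qed
  thus ?thesis using MI(2) by blast
qed

lemma jac_in: "j \<in> jacobson R \<Longrightarrow> maximal_left_ideal L R \<Longrightarrow> j \<in> L"
  unfolding jacobson_def by blast

lemma jac_carr: "j \<in> jacobson R \<Longrightarrow> j \<in> carrier R"
  unfolding jacobson_def by blast

lemma jacI: "j \<in> carrier R \<Longrightarrow> (\<And>L. maximal_left_ideal L R \<Longrightarrow> j \<in> L) \<Longrightarrow> j \<in> jacobson R"
  unfolding jacobson_def by blast

lemma jac_lmult: assumes "j \<in> jacobson R" "r \<in> carrier R" shows "r \<otimes> j \<in> jacobson R"
proof (rule jacI)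
  show "r \<otimes> j \<in> carrier R" using assms jac_carr by simp
  fix L assume L: "maximal_left_ideal L R"
  show "r \<otimes> j \<in> L" using left_idealD(5)[OF maxleftD(1)[OF L] assms(2) jac_in[OF assms(1) L]] .
qed

lemma jac_neg: assumes "j \<in> jacobson R" shows "\<ominus> j \<in> jacobson R"
proof (rule jacI)
  show "\<ominus> j \<in> carrier R" using assms jac_carr by simp
  fix L assume L: "maximal_left_ideal L R"
  show "\<ominus> j \<in> L" using left_idealD(4)[OF maxleftD(1)[OF L] jac_in[OF assms(1) L]] .
qed

lemma jac_left_inv:
  assumes j: "j \<in> jacobson R" shows "\<exists>x\<in>carrier R. x \<otimes> (\<one> \<oplus> j) = \<one>"
proof (rule ccontr)
  assume no: "\<not> ?thesis"
  have jc: "j \<in> carrier R" using jac_carr[OF j] .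
  define y where "y = \<one> \<oplus> j"
  have yc: "y \<in> carrier R" unfolding y_def using jc by simp
  define I where "I = {z. \<exists>r\<in>carrier R. z = r \<otimes> y}"
  have "left_ideal I R"
  proof (rule left_idealI)
    show "I \<subseteq> carrier R" unfolding I_def using yc by auto
    have "\<zero> = \<zero> \<otimes> y" using yc by simp
    thus "\<zero> \<in> I" unfolding I_def by blast
    show "a \<oplus> b \<in> I" if ab: "a \<in> I" "b \<in> I" for a b
    proof -
      obtain r1 r2 where r: "r1 \<in> carrier R" "r2 \<in> carrier R" "a = r1 \<otimes> y" "b = r2 \<otimes> y"
        using ab unfolding I_def by blast
      have "a \<oplus> b = (r1 \<oplus> r2) \<otimes> y" using r yc by (simp add: l_distr)
      thus ?thesis unfolding I_def using r(1,2) by blast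
    qed
    show "\<ominus> a \<in> I" if ab: "a \<in> I" for a
    proof -
      obtain r1 where r: "r1 \<in> carrier R" "a = r1 \<otimes> y" using ab unfolding I_def by blast
      have "\<ominus> a = (\<ominus> r1) \<otimes> y" using r yc by (simp add: l_minus)
      thus ?thesis unfolding I_def using r(1) by blast
    qed
    show "r \<otimes> a \<in> I" if ab: "r \<in> carrier R" "a \<in> I" for r a
    proof -
      obtain r1 where r1: "r1 \<in> carrier R" "a = r1 \<otimes> y" using ab unfolding I_def by blast
      have "r \<otimes> a = (r \<otimes> r1) \<otimes> y" using r1 yc ab(1) by (simp add: m_assoc)
      thus ?thesis unfolding I_def using r1(1) ab(1) by blast
    qed
  qed
  moreover have "\<one> \<notin> I" using no unfolding I_def y_def by auto
  ultimately obtain L where L: "maximal_left_ideal L R" "I \<subseteq> L" using exists_maxleft by blast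
  have "\<one> \<otimes> y = y" using yc by simp
  hence "y \<in> I" unfolding I_def by force
  hence yL: "y \<in> L" using L(2) by blast
  have jL: "j \<in> L" using jac_in[OF j L(1)] .
  have "y \<ominus> j \<in> L" using left_ideal_minus[OF maxleftD(1)[OF L(1)] yL jL] .
  moreover have "y \<ominus> j = \<one>" unfolding y_def using jc by (algebra; simp add: a_ac)
  ultimately show False using maxleftD(3)[OF L(1)] by simp
qed

lemma jac_unit:
  assumes j: "j \<in> jacobson R" shows "\<one> \<oplus> j \<in> Units R"
proof -
  have jc: "j \<in> carrier R" using jac_carr[OF j] .
  obtain x where x: "x \<in> carrier R" "x \<otimes> (\<one> \<oplus> j) = \<one>" using jac_left_inv[OF j] by blast
  have "x = x \<otimes> (\<one> \<oplus> j) \<oplus> \<ominus> (x \<otimes> j)" using x(1) jc by (algebra; simp add: a_ac)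
  hence xeq: "x = \<one> \<oplus> \<ominus> (x \<otimes> j)" using x(2) by simp
  have "\<ominus> (x \<otimes> j) \<in> jacobson R" using jac_neg[OF jac_lmult[OF j x(1)]] .
  then obtain z where z: "z \<in> carrier R" "z \<otimes> (\<one> \<oplus> \<ominus> (x \<otimes> j)) = \<one>" using jac_left_inv by blast
  hence zx: "z \<otimes> x = \<one>" using xeq by simp
  have yc: "\<one> \<oplus> j \<in> carrier R" using jc by simp
  have "z = z \<otimes> (x \<otimes> (\<one> \<oplus> j))" using x(2) z(1) by simp
  also have "\<dots> = (z \<otimes> x) \<otimes> (\<one> \<oplus> j)" using z(1) x(1) yc by (simp add: m_assoc)
  also have "\<dots> = \<one> \<oplus> j" using zx yc by simp
  finally have "(\<one> \<oplus> j) \<otimes> x = \<one>" using zx by simp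
  thus ?thesis unfolding Units_def using x yc by blast
qed

lemma SJ_to_S:
  assumes st: "star_ring R s" and sj: "strongly_J_star_clean R s"
  shows "strongly_star_clean R s"
  unfolding strongly_star_clean_def
proof
  fix a assume a: "a \<in> carrier R"
  obtain e j where e: "projection R s e" and j: "j \<in> jacobson R" and aej: "a = e \<oplus> j"
    and ae: "a \<otimes> e = e \<otimes> a" using sj a unfolding strongly_J_star_clean_def by blast
  note E = proj_D[OF e]
  have jc: "j \<in> carrier R" using jac_carr[OF j] .
  have "e \<oplus> j \<otimes> e = (e \<oplus> j) \<otimes> e" using E jc by (simp add: l_distr)
  also have "\<dots> = e \<otimes> (e \<oplus> j)" using ae aej by simp
  also have "\<dots> = e \<oplus> e \<otimes> j" using E jc by (simp add: r_distr)
  finally have ej: "e \<otimes> j = j \<otimes> e" using E jc by (metis m_closed add.l_cancel)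
  define w where "w = e \<oplus> e \<ominus> \<one>"
  have wc: "w \<in> carrier R" unfolding w_def using E by simp
  have "w \<otimes> w = (e \<otimes> e \<oplus> e \<otimes> e \<oplus> e \<otimes> e \<oplus> e \<otimes> e) \<ominus> (e \<oplus> e \<oplus> e \<oplus> e) \<oplus> \<one>"
    unfolding w_def using E(1) by (algebra; simp add: a_ac)
  also have "\<dots> = (e \<oplus> e \<oplus> e \<oplus> e) \<ominus> (e \<oplus> e \<oplus> e \<oplus> e) \<oplus> \<one>" using E by simp
  also have "\<dots> = \<one>" using E(1) by (algebra; simp add: a_ac)
  finally have ww: "w \<otimes> w = \<one>" .
  have wU: "w \<in> Units R" unfolding Units_def using ww wc by blast
  have "w \<otimes> (\<one> \<oplus> w \<otimes> j) = w \<oplus> (w \<otimes> w) \<otimes> j" using wc jc by (algebra; simp add: a_ac)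
  hence ueq: "w \<otimes> (\<one> \<oplus> w \<otimes> j) = w \<oplus> j" using ww jc by simp
  have "\<one> \<oplus> w \<otimes> j \<in> Units R" using jac_unit[OF jac_lmult[OF j wc]] .
  hence uU: "w \<oplus> j \<in> Units R" using ueq wU Units_m_closed by metis
  have e': "projection R s (\<one> \<ominus> e)" using proj_compl[OF st e] .
  have adec: "a = (\<one> \<ominus> e) \<oplus> (w \<oplus> j)" unfolding aej w_def using E(1) jc by (algebra; simp add: a_ac)
  have c1: "(\<one> \<ominus> e) \<otimes> (w \<oplus> j) = (\<one> \<ominus> e) \<otimes> w \<oplus> (j \<ominus> e \<otimes> j)" using E(1) wc jc by (algebra; simp add: a_ac)
  have c2: "(w \<oplus> j) \<otimes> (\<one> \<ominus> e) = w \<otimes> (\<one> \<ominus> e) \<oplus> (j \<ominus> j \<otimes> e)" using E(1) wc jc by (algebra; simp add: a_ac)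
  have c3: "(\<one> \<ominus> e) \<otimes> w = w \<otimes> (\<one> \<ominus> e)" unfolding w_def using E(1) by (algebra; simp add: a_ac)
  have comm: "(\<one> \<ominus> e) \<otimes> (w \<oplus> j) = (w \<oplus> j) \<otimes> (\<one> \<ominus> e)" using c1 c2 c3 ej by simp
  show "\<exists>e u. projection R s e \<and> u \<in> Units R \<and> a = e \<oplus> u \<and> e \<otimes> u = u \<otimes> e"
    using e' uU adec comm by blast
qed

lemma S_cleanH:
  assumes st: "star_ring R s" and sc: "strongly_star_clean R s"
  shows cleanH
  unfolding cleanH_def
proof
  fix x assume x: "x \<in> carrier R"
  obtain e u where e: "projection R s e" and u: "u \<in> Units R" and xeu: "x = e \<oplus> u"
    using sc x unfolding strongly_star_clean_def by blast
  note E = proj_D[OF e]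
  have "\<forall>r\<in>carrier R. e \<otimes> r = r \<otimes> e" using proj_central[OF st sc e] by blast
  thus "\<exists>f u. f \<in> carrier R \<and> f \<otimes> f = f \<and> (\<forall>r\<in>carrier R. f \<otimes> r = r \<otimes> f) \<and> u \<in> Units R \<and> x = f \<oplus> u"
    using E u xeu by blast
qed


lemma iso_imp_dich:
  assumes M: "ideal M R" and iso: "R Quot M \<simeq> ZFact 2" and x: "x \<in> carrier R"
  shows "x \<in> M \<or> x \<ominus> \<one> \<in> M"
proof -
  obtain \<phi> where \<phi>: "\<phi> \<in> ring_iso (R Quot M) (ZFact 2)" using iso unfolding is_ring_iso_def by blast
  have hom: "\<phi> \<in> ring_hom (R Quot M) (ZFact 2)" and bij: "bij_betw \<phi> (carrier (R Quot M)) (carrier (ZFact 2))"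
    using \<phi> unfolding ring_iso_def by auto
  have inj: "inj_on \<phi> (carrier (R Quot M))" using bij by (rule bij_betw_imp_inj_on)
  have Qr: "ring (R Quot M)" using ideal.quotient_is_ring[OF M] .
  have q: "(\<lambda>y. M +> y) \<in> ring_hom R (R Quot M)" using ideal.rcos_ring_hom[OF M] by simp
  have qc: "\<And>y. y \<in> carrier R \<Longrightarrow> M +> y \<in> carrier (R Quot M)" using ring_hom_closed[OF q] by simp
  have q0: "M +> \<zero> = \<zero>\<^bsub>R Quot M\<^esub>" using ring_hom_zero[OF q ring_axioms Qr] by simp
  have q1: "M +> \<one> = \<one>\<^bsub>R Quot M\<^esub>" using ring_hom_one[OF q] by simp
  have p0: "\<phi> (M +> \<zero>) = pi2 0" using q0 ring_hom_zero[OF hom Qr Z2_ring] pi2_zero by simp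
  have p1: "\<phi> (M +> \<one>) = pi2 1" using q1 ring_hom_one[OF hom] pi2_one by simp
  have "\<phi> (M +> x) \<in> carrier (ZFact 2)" using ring_hom_closed[OF hom qc[OF x]] .
  hence "\<phi> (M +> x) = \<phi> (M +> \<zero>) \<or> \<phi> (M +> x) = \<phi> (M +> \<one>)" using Z2_carrier p0 p1 by auto
  hence "M +> x = M +> \<zero> \<or> M +> x = M +> \<one>"
    using inj qc[OF x] qc[OF zero_closed] qc[OF one_closed] unfolding inj_on_def by blast
  hence "x \<ominus> \<zero> \<in> M \<or> x \<ominus> \<one> \<in> M"
    using quotient_eq_iff_same_a_r_cos[OF M x zero_closed] quotient_eq_iff_same_a_r_cos[OF M x one_closed] by blast
  thus ?thesis using x by (simp add: a_minus_def)
qed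

lemma dich_imp_iso:
  assumes M: "ideal M R" and one: "\<one> \<notin> M" and D: "\<And>x. x \<in> carrier R \<Longrightarrow> x \<in> M \<or> x \<ominus> \<one> \<in> M"
  shows "R Quot M \<simeq> ZFact 2"
proof -
  define c where "c x = (if x \<in> M then 0 else 1::int)" for x
  define h where "h x = pi2 (c x)" for x
  have MLi: "left_ideal M R" using ideal_left[OF M] .
  note MD = left_idealD[OF MLi]
  have Mc: "\<And>y. y \<in> M \<Longrightarrow> y \<in> carrier R" using MD(1) by blast
  have notM: "x \<ominus> \<one> \<in> M" if "x \<in> carrier R" "x \<notin> M" for x using D that by blast
  have two: "\<one> \<oplus> \<one> \<in> M"
  proof (rule ccontr)
    assume "\<one> \<oplus> \<one> \<notin> M"
    hence "(\<one> \<oplus> \<one>) \<ominus> \<one> \<in> M" using notM by simp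
    moreover have "(\<one> \<oplus> \<one>) \<ominus> \<one> = \<one>" by (algebra; simp add: a_ac)
    ultimately show False using one by simp
  qed
  have cadd: "c (x \<oplus> y) mod 2 = (c x + c y) mod 2" if xy: "x \<in> carrier R" "y \<in> carrier R" for x y
  proof (cases "x \<in> M")
    case True
    show ?thesis
    proof (cases "y \<in> M")
      case True
      hence "x \<oplus> y \<in> M" using \<open>x \<in> M\<close> MD(3) by blast
      thus ?thesis unfolding c_def using \<open>x \<in> M\<close> True by simp
    next
      case False
      have "x \<oplus> y \<notin> M"
      proof
        assume "x \<oplus> y \<in> M"
        hence "(x \<oplus> y) \<ominus> x \<in> M" using left_ideal_minus[OF MLi _ \<open>x \<in> M\<close>] by blast
        moreover have "(x \<oplus> y) \<ominus> x = y" using xy by (algebra; simp add: a_ac)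
        ultimately show False using False by simp
      qed
      thus ?thesis unfolding c_def using \<open>x \<in> M\<close> False by simp
    qed
  next
    case xM: False
    show ?thesis
    proof (cases "y \<in> M")
      case True
      have "x \<oplus> y \<notin> M"
      proof
        assume "x \<oplus> y \<in> M"
        hence "(x \<oplus> y) \<ominus> y \<in> M" using left_ideal_minus[OF MLi _ \<open>y \<in> M\<close>] by blast
        moreover have "(x \<oplus> y) \<ominus> y = x" using xy by (algebra; simp add: a_ac)
        ultimately show False using xM by simp
      qed
      thus ?thesis unfolding c_def using xM True by simp
    next
      case False
      have "(x \<ominus> \<one>) \<oplus> (y \<ominus> \<one>) \<oplus> (\<one> \<oplus> \<one>) \<in> M"
        using notM[OF xy(1) xM] notM[OF xy(2) False] two MD(3) by blast
      moreover have "(x \<ominus> \<one>) \<oplus> (y \<ominus> \<one>) \<oplus> (\<one> \<oplus> \<one>) = x \<oplus> y" using xy by (algebra; simp add: a_ac)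
      ultimately have "x \<oplus> y \<in> M" by simp
      thus ?thesis unfolding c_def using xM False by simp
    qed
  qed
  have cmult: "c (x \<otimes> y) = c x * c y" if xy: "x \<in> carrier R" "y \<in> carrier R" for x y
  proof (cases "x \<in> M")
    case True
    hence "x \<otimes> y \<in> M" using ideal.I_r_closed[OF M True xy(2)] by simp
    thus ?thesis unfolding c_def using True by simp
  next
    case xM: False
    show ?thesis
    proof (cases "y \<in> M")
      case True
      hence "x \<otimes> y \<in> M" using ideal.I_l_closed[OF M True xy(1)] by simp
      thus ?thesis unfolding c_def using True by simp
    next
      case False
      have "(x \<ominus> \<one>) \<otimes> y \<oplus> (y \<ominus> \<one>) \<in> M"
        using ideal.I_r_closed[OF M notM[OF xy(1) xM] xy(2)] notM[OF xy(2) False] MD(3) by blast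
      moreover have "(x \<ominus> \<one>) \<otimes> y \<oplus> (y \<ominus> \<one>) = x \<otimes> y \<ominus> \<one>" using xy by (algebra; simp add: a_ac)
      ultimately have h1: "x \<otimes> y \<ominus> \<one> \<in> M" by simp
      have "x \<otimes> y \<notin> M"
      proof
        assume "x \<otimes> y \<in> M"
        hence "(x \<otimes> y) \<ominus> (x \<otimes> y \<ominus> \<one>) \<in> M" using left_ideal_minus[OF MLi _ h1] by blast
        moreover have "(x \<otimes> y) \<ominus> (x \<otimes> y \<ominus> \<one>) = \<one>" using xy by (algebra; simp add: a_ac)
        ultimately show False using one by simp
      qed
      thus ?thesis unfolding c_def using xM False by simp
    qed
  qed
  have hom: "h \<in> ring_hom R (ZFact 2)"
  proof (rule ring_hom_memI)
    show "h x \<in> carrier (ZFact 2)" if "x \<in> carrier R" for x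
      unfolding h_def using ring_hom_closed[OF pi2_hom] by simp
    show "h (x \<otimes> y) = h x \<otimes>\<^bsub>ZFact 2\<^esub> h y" if "x \<in> carrier R" "y \<in> carrier R" for x y
      unfolding h_def using cmult[OF that] pi2_mult by simp
    show "h (x \<oplus> y) = h x \<oplus>\<^bsub>ZFact 2\<^esub> h y" if "x \<in> carrier R" "y \<in> carrier R" for x y
    proof -
      have "pi2 (c (x \<oplus> y)) = pi2 (c x + c y)" using cadd[OF that] pi2_eq by blast
      thus ?thesis unfolding h_def using pi2_add by simp
    qed
    show "h \<one> = \<one>\<^bsub>ZFact 2\<^esub>" unfolding h_def c_def using one pi2_one by simp
  qed
  have hr: "ring_hom_ring R (ZFact 2) h" using ring_hom_ringI2[OF ring_axioms Z2_ring hom] .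
  have "\<zero> \<in> M" using MD(2) .
  hence h0: "h \<zero> = pi2 0" unfolding h_def c_def by simp
  have h1: "h \<one> = pi2 1" unfolding h_def c_def using one by simp
  have surj: "h ` carrier R = carrier (ZFact 2)"
  proof
    show "h ` carrier R \<subseteq> carrier (ZFact 2)" using ring_hom_closed[OF hom] by blast
    show "carrier (ZFact 2) \<subseteq> h ` carrier R" unfolding Z2_carrier
      using h0 h1 zero_closed one_closed by blast
  qed
  have ker: "a_kernel R (ZFact 2) h = M"
  proof -
    have "h x = \<zero>\<^bsub>ZFact 2\<^esub> \<longleftrightarrow> x \<in> M" for x
    proof -
      have "h x = \<zero>\<^bsub>ZFact 2\<^esub> \<longleftrightarrow> pi2 (c x) = pi2 0" unfolding h_def using pi2_zero by simp
      also have "\<dots> \<longleftrightarrow> c x mod 2 = 0" using pi2_eq by simp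
      also have "\<dots> \<longleftrightarrow> x \<in> M" unfolding c_def by simp
      finally show ?thesis .
    qed
    thus ?thesis unfolding a_kernel_def' using Mc by blast
  qed
  show ?thesis using ring_hom_ring.FactRing_iso[OF hr surj] ker by simp
qed

lemma main_locale:
  assumes "star_ring R s"
  shows "strongly_J_star_clean R s \<longleftrightarrow>
           strongly_star_clean R s \<and>
           (\<forall>M. maximalideal M R \<longrightarrow> R Quot M \<simeq> ZFact 2)"
proof -
  note st = assms
  show ?thesis
  proof
    assume sj: "strongly_J_star_clean R s"
    have sc: "strongly_star_clean R s" using SJ_to_S[OF st sj] .
    have H: cleanH using S_cleanH[OF st sc] .
    have "R Quot M \<simeq> ZFact 2" if Mm: "maximalideal M R" for M
    proof -
      interpret MM: maximalideal M R by (rule Mm)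
      have Mi: "ideal M R" by (rule MM.is_ideal)
      have one: "\<one> \<notin> M" using MM.one_imp_carrier MM.I_notcarr by blast
      obtain L where L: "maximal_left_ideal L R" "M \<subseteq> L"
        using exists_maxleft[OF ideal_left[OF Mi] one] by blast
      have Lmax: "maximalideal L R" using maxleft_is_maximalideal[OF H L(1)] .
      have "ideal L R" using maximalideal.axioms(1)[OF Lmax] .
      moreover have "L \<subseteq> carrier R" using left_idealD(1)[OF maxleftD(1)[OF L(1)]] .
      ultimately have "L = M \<or> L = carrier R" using MM.I_maximal L(2) by blast
      hence LM: "L = M" using maxleftD(2)[OF L(1)] by blast
      show ?thesis
      proof (rule dich_imp_iso[OF Mi one])
        fix x assume x: "x \<in> carrier R"
        obtain e j where e: "projection R s e" and j: "j \<in> jacobson R" and xej: "x = e \<oplus> j"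
          and xe: "x \<otimes> e = e \<otimes> x" using sj x unfolding strongly_J_star_clean_def by blast
        note E = proj_D[OF e]
        have jc: "j \<in> carrier R" using jac_carr[OF j] .
        have jL: "j \<in> L" using jac_in[OF j L(1)] .
        have "e \<in> L \<or> \<one> \<ominus> e \<in> L"
          using central_idem_dich[OF L(1) E(1) E(2)] proj_central[OF st sc e] by blast
        thus "x \<in> M \<or> x \<ominus> \<one> \<in> M"
        proof
          assume "e \<in> L"
          hence "e \<oplus> j \<in> L" using jL left_idealD(3)[OF maxleftD(1)[OF L(1)]] by blast
          thus ?thesis using xej LM by simp
        next
          assume "\<one> \<ominus> e \<in> L"
          hence "j \<ominus> (\<one> \<ominus> e) \<in> L" using jL left_ideal_minus[OF maxleftD(1)[OF L(1)]] by blast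
          moreover have "j \<ominus> (\<one> \<ominus> e) = x \<ominus> \<one>" unfolding xej using E(1) jc by (algebra; simp add: a_ac)
          ultimately show ?thesis using LM by simp
        qed
      qed
    qed
    thus "strongly_star_clean R s \<and> (\<forall>M. maximalideal M R \<longrightarrow> R Quot M \<simeq> ZFact 2)"
      using sc by blast
  next
    assume rhs: "strongly_star_clean R s \<and> (\<forall>M. maximalideal M R \<longrightarrow> R Quot M \<simeq> ZFact 2)"
    have sc: "strongly_star_clean R s" using rhs by blast
    have isoM: "\<And>M. maximalideal M R \<Longrightarrow> R Quot M \<simeq> ZFact 2" using rhs by blast
    have H: cleanH using S_cleanH[OF st sc] .
    show "strongly_J_star_clean R s"
      unfolding strongly_J_star_clean_def
    proof
      fix a assume a: "a \<in> carrier R"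
      obtain e u where e: "projection R s e" and u: "u \<in> Units R" and aeu: "a = e \<oplus> u"
        and eu: "e \<otimes> u = u \<otimes> e" using sc a unfolding strongly_star_clean_def by blast
      note E = proj_D[OF e]
      have uc: "u \<in> carrier R" "inv u \<in> carrier R" using u by auto
      define w where "w = (u \<ominus> \<one>) \<oplus> (e \<oplus> e)"
      have wc: "w \<in> carrier R" unfolding w_def using uc E by simp
      have wJ: "w \<in> jacobson R"
      proof (rule jacI[OF wc])
        fix L assume L: "maximal_left_ideal L R"
        have Lmax: "maximalideal L R" using maxleft_is_maximalideal[OF H L] .
        have Li: "ideal L R" using maximalideal.axioms(1)[OF Lmax] .
        have LI: "left_ideal L R" using maxleftD(1)[OF L] .
        have dich: "\<And>x. x \<in> carrier R \<Longrightarrow> x \<in> L \<or> x \<ominus> \<one> \<in> L"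
          using iso_imp_dich[OF Li isoM[OF Lmax]] by blast
        have one: "\<one> \<notin> L" using maxleftD(3)[OF L] .
        have "u \<notin> L"
        proof
          assume "u \<in> L"
          hence "inv u \<otimes> u \<in> L" using left_idealD(5)[OF LI uc(2)] by blast
          thus False using one u by simp
        qed
        hence u1: "u \<ominus> \<one> \<in> L" using dich uc by blast
        have two: "\<one> \<oplus> \<one> \<in> L"
        proof (rule ccontr)
          assume "\<one> \<oplus> \<one> \<notin> L"
          hence "(\<one> \<oplus> \<one>) \<ominus> \<one> \<in> L" using dich[OF add.m_closed[OF one_closed one_closed]] by blast
          moreover have "(\<one> \<oplus> \<one>) \<ominus> \<one> = \<one>" by (algebra; simp add: a_ac)
          ultimately show False using one by simp
        qed
        have "(\<one> \<oplus> \<one>) \<otimes> e \<in> L" using ideal.I_r_closed[OF Li two E(1)] .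
        moreover have "(\<one> \<oplus> \<one>) \<otimes> e = e \<oplus> e" using E(1) by (simp add: l_distr)
        ultimately have "e \<oplus> e \<in> L" by simp
        thus "w \<in> L" unfolding w_def using u1 left_idealD(3)[OF LI] by blast
      qed
      have e': "projection R s (\<one> \<ominus> e)" using proj_compl[OF st e] .
      have adec: "a = (\<one> \<ominus> e) \<oplus> w" unfolding aeu w_def using E(1) uc(1) by (algebra; simp add: a_ac)
      have ea: "e \<otimes> a = a \<otimes> e" using proj_central[OF st sc e a] .
      have "a \<otimes> (\<one> \<ominus> e) = a \<ominus> a \<otimes> e" using a E(1) by (algebra; simp add: a_ac)
      also have "\<dots> = a \<ominus> e \<otimes> a" using ea by simp
      also have "\<dots> = (\<one> \<ominus> e) \<otimes> a" using a E(1) by (algebra; simp add: a_ac)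
      finally have comm: "a \<otimes> (\<one> \<ominus> e) = (\<one> \<ominus> e) \<otimes> a" .
      show "\<exists>e u. projection R s e \<and> u \<in> jacobson R \<and> a = e \<oplus> u \<and> a \<otimes> e = e \<otimes> a"
        using e' wJ adec comm by blast
    qed
  qed
qed

end

theorem proposition2p4:
  fixes R :: "('a, 'b) ring_scheme" and s :: "'a \<Rightarrow> 'a"
  assumes "star_ring R s"
  shows "strongly_J_star_clean R s \<longleftrightarrow>
           strongly_star_clean R s \<and>
           (\<forall>M. maximalideal M R \<longrightarrow> R Quot M \<simeq> ZFact 2)"
  using ring.main_locale[of R s] assms unfolding star_ring_def by blast

end
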